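(* Let $P$ be an NL poset on $X_n$ with twin classes $\alpha_1,\ldots,\alpha_r$ and twin poset $P_\equiv$. For $\varphi\in\mathrm{Aut}(P)$ and a twin class $\alpha$, set $\pi(\varphi)(\alpha)=\varphi(\alpha)=\{\varphi(x):x\in\alpha\}$. Then $\pi$ is a well-defined group homomorphism $\mathrm{Aut}(P)\to\mathrm{Aut}(P_\equiv)$, and its kernel (the automorphisms mapping each $\alpha_i$ onto itself) consists exactly of all bijections of $X_n$ that restrict to a permutation of each $\alpha_i$, so that $\ker(\pi)\cong\prod_{i=1}^r\mathfrak S_{|\alpha_i|}$. In particular, $\pi$ is surjective onto $\mathrm{Aut}(P_\equiv)$ if and only if every $\psi\in\mathrm{Aut}(P_\equiv)$ preserves twin-class sizes, i.e., $|\psi(\alpha)|=|\alpha|$ for all twin classes $\alpha$.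
   Context: Let $X_n=\{0,1,\ldots,n-1\}$. A naturally labeled (NL) poset on $X_n$ is a partial order $\preceq$ on $X_n$ such that $x\preceq y$ implies $x\le y$ in the usual integer order. $\mathrm{Aut}(P)$ is the group of bijections $\sigma$ of $X_n$ with $x\preceq y\iff\sigma(x)\preceq\sigma(y)$. For $x\in X_n$, $D(x)=\{z: z\prec x\}$, $U(x)=\{z: x\prec z\}$; $x,y$ are twins if $D(x)=D(y)$ and $U(x)=U(y)$, and the equivalence classes are the twin classes. The twin poset $P_\equiv$ is the set of twin classes ordered by $\alpha\preceq_\equiv\beta$ iff $x\preceq y$ for (any) $x\in\alpha$, $y\in\beta$. $\mathfrak S_k$ is the symmetric group on $k$ letters. *)

theory Defs
  imports "HOL-Algebra.Algebra"
begin

definition Xset :: "nat \<Rightarrow> nat set" where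
  "Xset n = {..<n}"

definition nl_poset :: "nat \<Rightarrow> (nat \<Rightarrow> nat \<Rightarrow> bool) \<Rightarrow> bool" where
  "nl_poset n leq \<longleftrightarrow>
     (\<forall>x y. leq x y \<longrightarrow> x \<in> Xset n \<and> y \<in> Xset n) \<and>
     (\<forall>x\<in>Xset n. leq x x) \<and>
     (\<forall>x y. leq x y \<longrightarrow> leq y x \<longrightarrow> x = y) \<and>
     (\<forall>x y z. leq x y \<longrightarrow> leq y z \<longrightarrow> leq x z) \<and>
     (\<forall>x y. leq x y \<longrightarrow> x \<le> y)"

definition down_set :: "nat \<Rightarrow> (nat \<Rightarrow> nat \<Rightarrow> bool) \<Rightarrow> nat \<Rightarrow> nat set" where
  "down_set n leq x = {z \<in> Xset n. leq z x \<and> z \<noteq> x}"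

definition up_set :: "nat \<Rightarrow> (nat \<Rightarrow> nat \<Rightarrow> bool) \<Rightarrow> nat \<Rightarrow> nat set" where
  "up_set n leq x = {z \<in> Xset n. leq x z \<and> x \<noteq> z}"

definition twins :: "nat \<Rightarrow> (nat \<Rightarrow> nat \<Rightarrow> bool) \<Rightarrow> nat \<Rightarrow> nat \<Rightarrow> bool" where
  "twins n leq x y \<longleftrightarrow> down_set n leq x = down_set n leq y \<and> up_set n leq x = up_set n leq y"

definition twin_classes :: "nat \<Rightarrow> (nat \<Rightarrow> nat \<Rightarrow> bool) \<Rightarrow> nat set set" where
  "twin_classes n leq = (\<lambda>x. {y \<in> Xset n. twins n leq x y}) ` Xset n"

text \<open>Order of the twin poset: alpha <= beta iff x <= y for some (equivalently any)
  x in alpha, y in beta.\<close>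
definition twin_le :: "(nat \<Rightarrow> nat \<Rightarrow> bool) \<Rightarrow> nat set \<Rightarrow> nat set \<Rightarrow> bool" where
  "twin_le leq \<alpha> \<beta> \<longleftrightarrow> (\<exists>x\<in>\<alpha>. \<exists>y\<in>\<beta>. leq x y)"

definition aut_group :: "'a set \<Rightarrow> ('a \<Rightarrow> 'a \<Rightarrow> bool) \<Rightarrow> ('a \<Rightarrow> 'a) monoid" where
  "aut_group S R = (BijGroup S)
     \<lparr>carrier := {\<sigma> \<in> Bij S. \<forall>x\<in>S. \<forall>y\<in>S. R x y \<longleftrightarrow> R (\<sigma> x) (\<sigma> y)}\<rparr>"

definition AutP :: "nat \<Rightarrow> (nat \<Rightarrow> nat \<Rightarrow> bool) \<Rightarrow> (nat \<Rightarrow> nat) monoid" where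
  "AutP n leq = aut_group (Xset n) leq"

definition AutTwin :: "nat \<Rightarrow> (nat \<Rightarrow> nat \<Rightarrow> bool) \<Rightarrow> (nat set \<Rightarrow> nat set) monoid" where
  "AutTwin n leq = aut_group (twin_classes n leq) (twin_le leq)"

definition twin_pi :: "nat \<Rightarrow> (nat \<Rightarrow> nat \<Rightarrow> bool) \<Rightarrow> (nat \<Rightarrow> nat) \<Rightarrow> (nat set \<Rightarrow> nat set)" where
  "twin_pi n leq \<phi> = (\<lambda>\<alpha> \<in> twin_classes n leq. \<phi> ` \<alpha>)"

end

theory Submission
  imports Defs "HOL-Combinatorics.Permutations"
begin

locale nlp = fixes n :: nat and leq :: "nat \<Rightarrow> nat \<Rightarrow> bool"
  assumes nl: "nl_poset n leq"
begin

abbreviation "Xn \<equiv> Xset n"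
abbreviation "tw \<equiv> twins n leq"
definition "cls x = {y \<in> Xn. tw x y}"
abbreviation "TC \<equiv> twin_classes n leq"

lemma TC_def: "TC = cls ` Xn" unfolding twin_classes_def cls_def by simp

lemma leq_X: "leq x y \<Longrightarrow> x \<in> Xn \<and> y \<in> Xn" using nl unfolding nl_poset_def by blast
lemma leq_refl: "x \<in> Xn \<Longrightarrow> leq x x" using nl unfolding nl_poset_def by blast

lemma tw_refl: "tw x x" by (simp add: twins_def)
lemma tw_sym: "tw x y \<Longrightarrow> tw y x" by (simp add: twins_def)
lemma tw_trans: "tw x y \<Longrightarrow> tw y z \<Longrightarrow> tw x z" by (simp add: twins_def)

lemma same_leq: assumes "tw x y" "leq x y" shows "x = y"
proof (rule ccontr)
  assume "x \<noteq> y"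
  then have "x \<in> down_set n leq y" using assms leq_X unfolding down_set_def by auto
  then have "x \<in> down_set n leq x" using assms unfolding twins_def by simp
  then show False unfolding down_set_def by simp
qed

lemma key1: assumes "tw x x'" "tw y y'" "\<not> tw x y" "leq x y" shows "leq x' y'"
proof -
  have "x \<noteq> y" using assms(3) tw_refl by auto
  then have "y \<in> up_set n leq x" using assms leq_X unfolding up_set_def by auto
  then have "y \<in> up_set n leq x'" using assms unfolding twins_def by simp
  then have a: "leq x' y" "x' \<noteq> y" unfolding up_set_def by auto
  then have "x' \<in> down_set n leq y" using leq_X unfolding down_set_def by auto
  then have "x' \<in> down_set n leq y'" using assms unfolding twins_def by simp
  then show ?thesis unfolding down_set_def by auto
qed

lemma key: assumes "tw x x'" "tw y y'" "\<not> tw x y" shows "leq x y \<longleftrightarrow> leq x' y'"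
proof -
  have "\<not> tw x' y'" using assms tw_sym tw_trans by blast
  then show ?thesis using key1[OF assms] key1[of x' x y' y] assms tw_sym by blast
qed

lemma cls_mem: "x \<in> Xn \<Longrightarrow> x \<in> cls x" by (simp add: cls_def tw_refl)
lemma cls_sub: "cls x \<subseteq> Xn" by (auto simp: cls_def)
lemma cls_eq: "y \<in> cls x \<Longrightarrow> cls y = cls x"
  unfolding cls_def using tw_sym tw_trans by blast
lemma cls_tw: "y \<in> cls x \<Longrightarrow> tw x y" by (simp add: cls_def)
lemma cls_eq_iff: "x \<in> Xn \<Longrightarrow> y \<in> Xn \<Longrightarrow> cls x = cls y \<longleftrightarrow> tw x y"
proof
  assume "x \<in> Xn" "y \<in> Xn" "cls x = cls y"
  then show "tw x y" using cls_mem[of y] cls_tw[of y x] by simp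
next
  assume "x \<in> Xn" "y \<in> Xn" "tw x y"
  then show "cls x = cls y" using cls_eq[of y x] by (simp add: cls_def)
qed

lemma TC_sub: "\<alpha> \<in> TC \<Longrightarrow> \<alpha> \<subseteq> Xn" using cls_sub TC_def by auto
lemma TC_fin: "\<alpha> \<in> TC \<Longrightarrow> finite \<alpha>" using TC_sub finite_subset unfolding Xset_def by blast
lemma TC_cls: assumes "\<alpha> \<in> TC" "x \<in> \<alpha>" shows "\<alpha> = cls x"
proof -
  obtain y where "y \<in> Xn" "\<alpha> = cls y" using assms(1) unfolding TC_def by blast
  then show ?thesis using cls_eq[of x y] assms(2) by simp
qed
lemma TC_disj: assumes "\<alpha> \<in> TC" "\<beta> \<in> TC" "z \<in> \<alpha>" "z \<in> \<beta>" shows "\<alpha> = \<beta>"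
proof -
  have "\<alpha> = cls z" "\<beta> = cls z" using TC_cls[OF assms(1,3)] TC_cls[OF assms(2,4)] by simp_all
  then show ?thesis by simp
qed
lemma cls_TC: "x \<in> Xn \<Longrightarrow> cls x \<in> TC" using TC_def by auto

lemma in_class_leq: "\<alpha> \<in> TC \<Longrightarrow> x \<in> \<alpha> \<Longrightarrow> y \<in> \<alpha> \<Longrightarrow> leq x y \<longleftrightarrow> x = y"
proof -
  assume a: "\<alpha> \<in> TC" "x \<in> \<alpha>" "y \<in> \<alpha>"
  then have "\<alpha> = cls x" using TC_cls by blast
  then have "tw x y" using a cls_tw by simp
  moreover have "x \<in> Xn" using a TC_sub by auto
  ultimately show ?thesis using same_leq leq_refl by auto
qed

lemma diff_class_leq: assumes "\<alpha> \<in> TC" "\<beta> \<in> TC" "\<alpha> \<noteq> \<beta>" "x \<in> \<alpha>" "y \<in> \<beta>"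
  shows "leq x y \<longleftrightarrow> twin_le leq \<alpha> \<beta>"
proof
  assume "leq x y" then show "twin_le leq \<alpha> \<beta>" using assms unfolding twin_le_def by blast
next
  assume "twin_le leq \<alpha> \<beta>"
  then obtain x' y' where xy: "x' \<in> \<alpha>" "y' \<in> \<beta>" "leq x' y'" unfolding twin_le_def by blast
  have ax: "\<alpha> = cls x'" "\<alpha> = cls x" "\<beta> = cls y'" "\<beta> = cls y" using TC_cls[OF assms(1) xy(1)] TC_cls[OF assms(1,4)] TC_cls[OF assms(2) xy(2)] TC_cls[OF assms(2,5)] by simp_all
  have "tw x' x" using ax assms(4) cls_tw by metis
  moreover have "tw y' y" using ax assms(5) cls_tw by metis
  moreover have "\<not> tw x' y'" proof
    assume "tw x' y'"
    moreover have "x' \<in> Xn" "y' \<in> Xn" using xy leq_X by auto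
    ultimately have "cls x' = cls y'" using cls_eq_iff by blast
    then show False using ax assms(3) by simp
  qed
  ultimately show "leq x y" using key xy by blast
qed

definition "isAut \<phi> \<longleftrightarrow> \<phi> \<in> Bij Xn \<and> (\<forall>x\<in>Xn. \<forall>y\<in>Xn. leq x y \<longleftrightarrow> leq (\<phi> x) (\<phi> y))"

lemma carrier_AutP: "carrier (AutP n leq) = {\<phi>. isAut \<phi>}"
  by (auto simp: AutP_def aut_group_def isAut_def BijGroup_def)

lemma down_img: assumes "isAut \<phi>" "x \<in> Xn" shows "down_set n leq (\<phi> x) = \<phi> ` down_set n leq x"
proof -
  have b: "bij_betw \<phi> Xn Xn" using assms unfolding isAut_def Bij_def by auto
  have p: "\<And>x y. x \<in> Xn \<Longrightarrow> y \<in> Xn \<Longrightarrow> leq x y \<longleftrightarrow> leq (\<phi> x) (\<phi> y)" using assms unfolding isAut_def by blast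
  show ?thesis
  proof (intro equalityI subsetI)
    fix z assume "z \<in> down_set n leq (\<phi> x)"
    then have z: "z \<in> Xn" "leq z (\<phi> x)" "z \<noteq> \<phi> x" unfolding down_set_def by auto
    then obtain w where w: "w \<in> Xn" "z = \<phi> w" using b by (metis bij_betw_imp_surj_on imageE)
    then show "z \<in> \<phi> ` down_set n leq x" using z p[of w x] assms unfolding down_set_def by auto
  next
    fix z assume "z \<in> \<phi> ` down_set n leq x"
    then obtain w where "w \<in> Xn" "leq w x" "w \<noteq> x" "z = \<phi> w" unfolding down_set_def by auto
    then show "z \<in> down_set n leq (\<phi> x)" using p[of w x] assms b
      unfolding down_set_def bij_betw_def inj_on_def by auto
  qed
qed

lemma up_img: assumes "isAut \<phi>" "x \<in> Xn" shows "up_set n leq (\<phi> x) = \<phi> ` up_set n leq x"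
proof -
  have b: "bij_betw \<phi> Xn Xn" using assms unfolding isAut_def Bij_def by auto
  have p: "\<And>x y. x \<in> Xn \<Longrightarrow> y \<in> Xn \<Longrightarrow> leq x y \<longleftrightarrow> leq (\<phi> x) (\<phi> y)" using assms unfolding isAut_def by blast
  show ?thesis
  proof (intro equalityI subsetI)
    fix z assume "z \<in> up_set n leq (\<phi> x)"
    then have z: "z \<in> Xn" "leq (\<phi> x) z" "z \<noteq> \<phi> x" unfolding up_set_def by auto
    then obtain w where w: "w \<in> Xn" "z = \<phi> w" using b by (metis bij_betw_imp_surj_on imageE)
    then show "z \<in> \<phi> ` up_set n leq x" using z p[of x w] assms unfolding up_set_def by auto
  next
    fix z assume "z \<in> \<phi> ` up_set n leq x"
    then obtain w where "w \<in> Xn" "leq x w" "w \<noteq> x" "z = \<phi> w" unfolding up_set_def by auto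
    then show "z \<in> up_set n leq (\<phi> x)" using p[of x w] assms b
      unfolding up_set_def bij_betw_def inj_on_def by auto
  qed
qed

lemma tw_img: assumes "isAut \<phi>" "x \<in> Xn" "y \<in> Xn" shows "tw (\<phi> x) (\<phi> y) \<longleftrightarrow> tw x y"
proof -
  have i: "inj_on \<phi> Xn" using assms unfolding isAut_def Bij_def bij_betw_def by auto
  have d: "down_set n leq (\<phi> x) = \<phi> ` down_set n leq x" "down_set n leq (\<phi> y) = \<phi> ` down_set n leq y"
    using down_img assms by auto
  have u: "up_set n leq (\<phi> x) = \<phi> ` up_set n leq x" "up_set n leq (\<phi> y) = \<phi> ` up_set n leq y"
    using up_img assms by auto
  have e1: "\<phi> ` down_set n leq x = \<phi> ` down_set n leq y \<longleftrightarrow> down_set n leq x = down_set n leq y"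
    by (rule inj_on_image_eq_iff[OF i]) (auto simp: down_set_def)
  have e2: "\<phi> ` up_set n leq x = \<phi> ` up_set n leq y \<longleftrightarrow> up_set n leq x = up_set n leq y"
    by (rule inj_on_image_eq_iff[OF i]) (auto simp: up_set_def)
  show ?thesis unfolding twins_def d u e1 e2 ..
qed

lemma aut_X: "isAut \<phi> \<Longrightarrow> x \<in> Xn \<Longrightarrow> \<phi> x \<in> Xn"
  unfolding isAut_def Bij_def bij_betw_def by auto

lemma cls_img: assumes "isAut \<phi>" "x \<in> Xn" shows "\<phi> ` cls x = cls (\<phi> x)"
proof -
  have b: "bij_betw \<phi> Xn Xn" using assms unfolding isAut_def Bij_def by auto
  show ?thesis
  proof (intro equalityI subsetI)
    fix z assume "z \<in> \<phi> ` cls x"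
    then obtain w where w: "w \<in> Xn" "tw x w" "z = \<phi> w" unfolding cls_def by auto
    then have "tw (\<phi> x) (\<phi> w)" using tw_img[OF assms w(1)] by simp
    then show "z \<in> cls (\<phi> x)" using w aut_X[OF assms(1)] unfolding cls_def by auto
  next
    fix z assume z: "z \<in> cls (\<phi> x)"
    then have "z \<in> Xn" by (simp add: cls_def)
    then obtain w where w: "w \<in> Xn" "z = \<phi> w" using b by (metis bij_betw_imp_surj_on imageE)
    have "tw x w" using z w tw_img[OF assms w(1)] unfolding cls_def by auto
    then show "z \<in> \<phi> ` cls x" using w unfolding cls_def by auto
  qed
qed

lemma img_TC: assumes "isAut \<phi>" "\<alpha> \<in> TC" shows "\<phi> ` \<alpha> \<in> TC"
proof -
  obtain x where "x \<in> Xn" "\<alpha> = cls x" using assms TC_def by auto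
  moreover have "\<phi> x \<in> Xn" using assms calculation unfolding isAut_def Bij_def bij_betw_def by auto
  ultimately show ?thesis using cls_img assms cls_TC by auto
qed

end

context nlp begin

lemma carrier_AutTwin: "carrier (AutTwin n leq) =
  {\<psi> \<in> Bij TC. \<forall>\<alpha>\<in>TC. \<forall>\<beta>\<in>TC. twin_le leq \<alpha> \<beta> \<longleftrightarrow> twin_le leq (\<psi> \<alpha>) (\<psi> \<beta>)}"
  by (auto simp: AutTwin_def aut_group_def BijGroup_def)

lemma mult_AutP: "g \<in> Bij Xn \<Longrightarrow> f \<in> Bij Xn \<Longrightarrow> g \<otimes>\<^bsub>AutP n leq\<^esub> f = compose Xn g f"
  by (simp add: AutP_def aut_group_def BijGroup_def)

lemma mult_AutTwin: "g \<in> Bij TC \<Longrightarrow> f \<in> Bij TC \<Longrightarrow> g \<otimes>\<^bsub>AutTwin n leq\<^esub> f = compose TC g f"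
  by (simp add: AutTwin_def aut_group_def BijGroup_def)

lemma one_AutTwin: "\<one>\<^bsub>AutTwin n leq\<^esub> = (\<lambda>\<alpha>\<in>TC. \<alpha>)"
  by (simp add: AutTwin_def aut_group_def BijGroup_def)

lemma aut_bij: "isAut \<phi> \<Longrightarrow> bij_betw \<phi> Xn Xn" unfolding isAut_def Bij_def by auto
lemma aut_inj: "isAut \<phi> \<Longrightarrow> inj_on \<phi> Xn" using aut_bij bij_betw_def by blast
lemma aut_leq: "isAut \<phi> \<Longrightarrow> x \<in> Xn \<Longrightarrow> y \<in> Xn \<Longrightarrow> leq x y \<longleftrightarrow> leq (\<phi> x) (\<phi> y)"
  unfolding isAut_def by blast

lemma pi_carrier: assumes a: "isAut \<phi>" shows "twin_pi n leq \<phi> \<in> carrier (AutTwin n leq)"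
proof -
  have i: "inj_on \<phi> Xn" using aut_inj a .
  have inj: "inj_on (\<lambda>\<alpha>. \<phi> ` \<alpha>) TC"
  proof (rule inj_onI)
    fix \<alpha> \<beta> assume "\<alpha> \<in> TC" "\<beta> \<in> TC" "\<phi> ` \<alpha> = \<phi> ` \<beta>"
    then show "\<alpha> = \<beta>" using inj_on_image_eq_iff[OF i] TC_sub by blast
  qed
  have im: "(\<lambda>\<alpha>. \<phi> ` \<alpha>) ` TC = TC"
  proof (intro equalityI subsetI)
    fix \<beta> assume "\<beta> \<in> (\<lambda>\<alpha>. \<phi> ` \<alpha>) ` TC" then show "\<beta> \<in> TC" using img_TC[OF a] by auto
  next
    fix \<beta> assume b: "\<beta> \<in> TC"
    then obtain y where y: "y \<in> Xn" "\<beta> = cls y" unfolding TC_def by blast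
    then obtain x where x: "x \<in> Xn" "y = \<phi> x" using aut_bij[OF a] by (metis bij_betw_imp_surj_on imageE)
    then have "\<beta> = \<phi> ` cls x" using y cls_img[OF a] by simp
    then show "\<beta> \<in> (\<lambda>\<alpha>. \<phi> ` \<alpha>) ` TC" using cls_TC x by blast
  qed
  have bij: "bij_betw (twin_pi n leq \<phi>) TC TC"
    unfolding twin_pi_def using inj im by (simp add: bij_betw_def inj_on_def)
  have le: "twin_le leq \<alpha> \<beta> \<longleftrightarrow> twin_le leq (\<phi> ` \<alpha>) (\<phi> ` \<beta>)" if "\<alpha> \<in> TC" "\<beta> \<in> TC" for \<alpha> \<beta>
  proof -
    have s: "\<alpha> \<subseteq> Xn" "\<beta> \<subseteq> Xn" using that TC_sub by auto
    show ?thesis unfolding twin_le_def using aut_leq[OF a] s by blast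
  qed
  show ?thesis unfolding carrier_AutTwin Bij_def using bij le
    by (simp add: twin_pi_def)
qed

lemma pi_mult: assumes "isAut g" "isAut f"
  shows "twin_pi n leq (g \<otimes>\<^bsub>AutP n leq\<^esub> f) = twin_pi n leq g \<otimes>\<^bsub>AutTwin n leq\<^esub> twin_pi n leq f"
proof -
  have gb: "g \<in> Bij Xn" "f \<in> Bij Xn" using assms isAut_def by auto
  have pb: "twin_pi n leq g \<in> Bij TC" "twin_pi n leq f \<in> Bij TC"
    using pi_carrier assms carrier_AutTwin by auto
  show ?thesis unfolding mult_AutP[OF gb] mult_AutTwin[OF pb]
  proof (rule ext)
    fix \<alpha> show "twin_pi n leq (compose Xn g f) \<alpha> = compose TC (twin_pi n leq g) (twin_pi n leq f) \<alpha>"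
    proof (cases "\<alpha> \<in> TC")
      case True
      have s: "\<alpha> \<subseteq> Xn" using TC_sub True by auto
      have "compose Xn g f ` \<alpha> = g ` f ` \<alpha>" using s by (auto simp: compose_def)
      moreover have "f ` \<alpha> \<in> TC" using img_TC assms True by auto
      ultimately show ?thesis using True by (simp add: twin_pi_def compose_def)
    next
      case False then show ?thesis by (simp add: twin_pi_def compose_def)
    qed
  qed
qed

lemma pi_hom: "twin_pi n leq \<in> hom (AutP n leq) (AutTwin n leq)"
  unfolding hom_def using pi_carrier pi_mult carrier_AutP by auto

definition "Kset = {\<sigma> \<in> Bij Xn. \<forall>\<alpha>\<in>TC. bij_betw \<sigma> \<alpha> \<alpha>}"

lemma Kset_aut: assumes "\<sigma> \<in> Kset" shows "isAut \<sigma>"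
proof -
  have B: "\<sigma> \<in> Bij Xn" and bb: "\<And>\<alpha>. \<alpha> \<in> TC \<Longrightarrow> bij_betw \<sigma> \<alpha> \<alpha>" using assms Kset_def by auto
  have i: "inj_on \<sigma> Xn" using B unfolding Bij_def bij_betw_def by auto
  have inc: "\<sigma> x \<in> cls x" if "x \<in> Xn" for x
    using bb[OF cls_TC[OF that]] cls_mem[OF that] bij_betw_apply by fast
  have "leq x y \<longleftrightarrow> leq (\<sigma> x) (\<sigma> y)" if xy: "x \<in> Xn" "y \<in> Xn" for x y
  proof (cases "tw x y")
    case True
    then have e: "cls y = cls x" using cls_eq_iff[OF xy] by simp
    have m: "x \<in> cls x" "y \<in> cls x" "\<sigma> x \<in> cls x" "\<sigma> y \<in> cls x" using inc xy e cls_mem by auto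
    have "leq x y \<longleftrightarrow> x = y" using in_class_leq[OF cls_TC[OF xy(1)] m(1,2)] .
    also have "\<dots> \<longleftrightarrow> \<sigma> x = \<sigma> y" using i xy inj_on_def by metis
    also have "\<dots> \<longleftrightarrow> leq (\<sigma> x) (\<sigma> y)" using in_class_leq[OF cls_TC[OF xy(1)] m(3,4)] by simp
    finally show ?thesis .
  next
    case False
    have "tw x (\<sigma> x)" "tw y (\<sigma> y)" using inc xy cls_tw by auto
    then show ?thesis using key False by blast
  qed
  then show ?thesis unfolding isAut_def using B by blast
qed

lemma kernel_eq: "kernel (AutP n leq) (AutTwin n leq) (twin_pi n leq) = Kset"
proof (intro equalityI subsetI)
  fix \<sigma> assume "\<sigma> \<in> kernel (AutP n leq) (AutTwin n leq) (twin_pi n leq)"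
  then have a: "isAut \<sigma>" and e: "twin_pi n leq \<sigma> = (\<lambda>\<alpha>\<in>TC. \<alpha>)"
    unfolding kernel_def carrier_AutP one_AutTwin by auto
  have "bij_betw \<sigma> \<alpha> \<alpha>" if "\<alpha> \<in> TC" for \<alpha>
  proof -
    have "\<sigma> ` \<alpha> = \<alpha>" using fun_cong[OF e, of \<alpha>] that by (simp add: twin_pi_def)
    moreover have "inj_on \<sigma> \<alpha>" using aut_inj[OF a] TC_sub[OF that] inj_on_subset by blast
    ultimately show ?thesis by (simp add: bij_betw_def)
  qed
  then show "\<sigma> \<in> Kset" using a unfolding Kset_def isAut_def by blast
next
  fix \<sigma> assume k: "\<sigma> \<in> Kset"
  then have a: "isAut \<sigma>" using Kset_aut by blast
  have "twin_pi n leq \<sigma> = (\<lambda>\<alpha>\<in>TC. \<alpha>)"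
    using k unfolding twin_pi_def Kset_def by (auto simp: bij_betw_def intro!: restrict_ext)
  then show "\<sigma> \<in> kernel (AutP n leq) (AutTwin n leq) (twin_pi n leq)"
    unfolding kernel_def carrier_AutP one_AutTwin using a by auto
qed

end

context nlp begin

abbreviation "S \<alpha> \<equiv> {1..card (\<alpha>::nat set)}"
definition "e \<alpha> = (SOME h. bij_betw h (S \<alpha>) \<alpha>)"
definition "ei \<alpha> = inv_into (S \<alpha>) (e \<alpha>)"

lemma e_bij: "\<alpha> \<in> TC \<Longrightarrow> bij_betw (e \<alpha>) (S \<alpha>) \<alpha>"
  unfolding e_def using ex_bij_betw_nat_finite_1[OF TC_fin] by (rule someI_ex)
lemma ei_bij: "\<alpha> \<in> TC \<Longrightarrow> bij_betw (ei \<alpha>) \<alpha> (S \<alpha>)"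
  unfolding ei_def using e_bij bij_betw_inv_into by blast
lemma e_ei: "\<alpha> \<in> TC \<Longrightarrow> z \<in> \<alpha> \<Longrightarrow> e \<alpha> (ei \<alpha> z) = z"
  unfolding ei_def using e_bij bij_betw_inv_into_right by fast
lemma ei_e: "\<alpha> \<in> TC \<Longrightarrow> i \<in> S \<alpha> \<Longrightarrow> ei \<alpha> (e \<alpha> i) = i"
  unfolding ei_def using e_bij bij_betw_inv_into_left by fast
lemma e_in: "\<alpha> \<in> TC \<Longrightarrow> i \<in> S \<alpha> \<Longrightarrow> e \<alpha> i \<in> \<alpha>"
  using e_bij bij_betw_apply by fast
lemma ei_in: "\<alpha> \<in> TC \<Longrightarrow> z \<in> \<alpha> \<Longrightarrow> ei \<alpha> z \<in> S \<alpha>"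
  using ei_bij bij_betw_apply by fast

definition "Phi \<sigma> = (\<lambda>\<alpha>\<in>TC. \<lambda>i. if i \<in> S \<alpha> then ei \<alpha> (\<sigma> (e \<alpha> i)) else i)"

lemma Phi_carrier: assumes "\<sigma> \<in> Kset"
  shows "Phi \<sigma> \<in> (\<Pi>\<^sub>E \<alpha>\<in>TC. carrier (sym_group (card \<alpha>)))"
proof -
  have "(\<lambda>i. if i \<in> S \<alpha> then ei \<alpha> (\<sigma> (e \<alpha> i)) else i) permutes S \<alpha>" if a: "\<alpha> \<in> TC" for \<alpha>
  proof (rule bij_imp_permutes)
    have b: "bij_betw \<sigma> \<alpha> \<alpha>" using assms a Kset_def by auto
    have "bij_betw (ei \<alpha> \<circ> (\<sigma> \<circ> e \<alpha>)) (S \<alpha>) (S \<alpha>)"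
      using bij_betw_trans[OF bij_betw_trans[OF e_bij[OF a] b] ei_bij[OF a]] .
    then show "bij_betw (\<lambda>i. if i \<in> S \<alpha> then ei \<alpha> (\<sigma> (e \<alpha> i)) else i) (S \<alpha>) (S \<alpha>)"
      by (rule bij_betw_cong[THEN iffD1, rotated]) auto
  qed auto
  then show ?thesis unfolding Phi_def by (auto simp: sym_group_def)
qed

lemma Kset_bij: "\<sigma> \<in> Kset \<Longrightarrow> \<alpha> \<in> TC \<Longrightarrow> bij_betw \<sigma> \<alpha> \<alpha>" by (simp add: Kset_def)
lemma Kset_in: "\<sigma> \<in> Kset \<Longrightarrow> \<alpha> \<in> TC \<Longrightarrow> x \<in> \<alpha> \<Longrightarrow> \<sigma> x \<in> \<alpha>"
  using Kset_bij bij_betw_apply by fast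

lemma Phi_mult: assumes "g \<in> Kset" "f \<in> Kset"
  shows "Phi (compose Xn g f) = (\<lambda>\<alpha>\<in>TC. Phi g \<alpha> \<circ> Phi f \<alpha>)"
proof (rule ext)
  fix \<alpha> show "Phi (compose Xn g f) \<alpha> = (\<lambda>\<alpha>\<in>TC. Phi g \<alpha> \<circ> Phi f \<alpha>) \<alpha>"
  proof (cases "\<alpha> \<in> TC")
    case a: True
    show ?thesis
    proof (rule ext)
      fix i show "Phi (compose Xn g f) \<alpha> i = (\<lambda>\<alpha>\<in>TC. Phi g \<alpha> \<circ> Phi f \<alpha>) \<alpha> i"
      proof (cases "i \<in> S \<alpha>")
        case i: True
        have ein: "e \<alpha> i \<in> \<alpha>" using e_in a i by blast
        then have X: "e \<alpha> i \<in> Xn" using TC_sub a by blast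
        have fi: "f (e \<alpha> i) \<in> \<alpha>" using Kset_in assms ein a by blast
        have j: "ei \<alpha> (f (e \<alpha> i)) \<in> S \<alpha>" using ei_in a fi by blast
        show ?thesis using a i X j e_ei[OF a fi] by (simp add: Phi_def compose_def)
      next
        case ni: False
        have "Phi f \<alpha> i = i" "Phi g \<alpha> i = i" "Phi (compose Xn g f) \<alpha> i = i"
          using a ni unfolding Phi_def by auto
        then show ?thesis using a by simp
      qed
    qed
  next
    case False then show ?thesis by (simp add: Phi_def)
  qed
qed

lemma Phi_inj: "inj_on Phi Kset"
proof (rule inj_onI)
  fix g f assume g: "g \<in> Kset" and f: "f \<in> Kset" and eq: "Phi g = Phi f"
  show "g = f"
  proof (rule ext)
    fix x show "g x = f x"
    proof (cases "x \<in> Xn")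
      case x: True
      define \<alpha> where "\<alpha> = cls x"
      have a: "\<alpha> \<in> TC" "x \<in> \<alpha>" using x cls_TC cls_mem \<alpha>_def by auto
      define i where "i = ei \<alpha> x"
      have i: "i \<in> S \<alpha>" "e \<alpha> i = x" using ei_in e_ei a i_def by auto
      have "Phi g \<alpha> i = Phi f \<alpha> i" using eq by simp
      then have "ei \<alpha> (g x) = ei \<alpha> (f x)" using a i by (simp add: Phi_def)
      moreover have "g x \<in> \<alpha>" "f x \<in> \<alpha>" using Kset_in g f a by auto
      ultimately show ?thesis using e_ei[OF a(1)] by metis
    next
      case False
      then show ?thesis using g f unfolding Kset_def Bij_def extensional_def by auto
    qed
  qed
qed

definition "Psi p = (\<lambda>x\<in>Xn. e (cls x) (p (cls x) (ei (cls x) x)))"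

lemma Psi_on: assumes "\<alpha> \<in> TC" "x \<in> \<alpha>" shows "Psi p x = e \<alpha> (p \<alpha> (ei \<alpha> x))"
proof -
  have "x \<in> Xn" using assms TC_sub by blast
  moreover have "cls x = \<alpha>" using TC_cls[OF assms] by simp
  ultimately show ?thesis by (simp add: Psi_def)
qed

lemma Psi_K: assumes p: "p \<in> (\<Pi>\<^sub>E \<alpha>\<in>TC. carrier (sym_group (card \<alpha>)))"
  shows "Psi p \<in> Kset" "Phi (Psi p) = p"
proof -
  have pp: "p \<alpha> permutes S \<alpha>" if "\<alpha> \<in> TC" for \<alpha>
  proof -
    have "p \<alpha> \<in> carrier (sym_group (card \<alpha>))" using PiE_mem[OF p that] .
    then show ?thesis by (simp add: sym_group_carrier)
  qed
  have bb: "bij_betw (Psi p) \<alpha> \<alpha>" if a: "\<alpha> \<in> TC" for \<alpha>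
  proof -
    have "bij_betw (e \<alpha> \<circ> (p \<alpha> \<circ> ei \<alpha>)) \<alpha> \<alpha>"
      using bij_betw_trans[OF bij_betw_trans[OF ei_bij[OF a] permutes_imp_bij[OF pp[OF a]]] e_bij[OF a]] .
    then show ?thesis by (rule bij_betw_cong[THEN iffD1, rotated]) (simp add: Psi_on[OF a])
  qed
  have inc: "Psi p x \<in> cls x" if "x \<in> Xn" for x
  proof -
    have "bij_betw (Psi p) (cls x) (cls x)" by (rule bb[OF cls_TC[OF that]])
    then show ?thesis by (rule bij_betw_apply) (rule cls_mem[OF that])
  qed
  have inj: "inj_on (Psi p) Xn"
  proof (rule inj_onI)
    fix x y assume xy: "x \<in> Xn" "y \<in> Xn" "Psi p x = Psi p y"
    have c1: "Psi p x \<in> cls x" by (rule inc[OF xy(1)])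
    have c2: "Psi p x \<in> cls y" unfolding xy(3) by (rule inc[OF xy(2)])
    have e: "cls x = cls y" by (rule TC_disj[OF cls_TC[OF xy(1)] cls_TC[OF xy(2)] c1 c2])
    have y: "y \<in> cls x" unfolding e by (rule cls_mem[OF xy(2)])
    have "bij_betw (Psi p) (cls x) (cls x)" by (rule bb[OF cls_TC[OF xy(1)]])
    then have ic: "inj_on (Psi p) (cls x)" by (rule bij_betw_imp_inj_on)
    show "x = y" by (rule inj_onD[OF ic xy(3) cls_mem[OF xy(1)] y])
  qed
  have im: "Psi p ` Xn = Xn"
  proof (intro equalityI subsetI)
    fix z assume "z \<in> Psi p ` Xn"
    then obtain x where x: "x \<in> Xn" "z = Psi p x" by (rule imageE)
    have "z \<in> cls x" unfolding x(2) by (rule inc[OF x(1)])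
    then show "z \<in> Xn" using cls_sub[of x] by (rule subsetD[rotated])
  next
    fix z assume z: "z \<in> Xn"
    have "bij_betw (Psi p) (cls z) (cls z)" by (rule bb[OF cls_TC[OF z]])
    then have "Psi p ` cls z = cls z" by (rule bij_betw_imp_surj_on)
    then have "z \<in> Psi p ` cls z" using cls_mem[OF z] by simp
    then obtain w where w: "w \<in> cls z" "z = Psi p w" by (rule imageE)
    have "w \<in> Xn" using cls_sub[of z] w(1) by (rule subsetD)
    then show "z \<in> Psi p ` Xn" using w(2) by (rule rev_image_eqI)
  qed
  have extn: "Psi p \<in> extensional Xn" unfolding Psi_def by simp
  have "bij_betw (Psi p) Xn Xn" using inj im by (simp add: bij_betw_def)
  then have "Psi p \<in> Bij Xn" using extn by (simp add: Bij_def)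
  then show K: "Psi p \<in> Kset" using bb Kset_def by auto
  show "Phi (Psi p) = p"
  proof (rule ext)
    fix \<alpha> show "Phi (Psi p) \<alpha> = p \<alpha>"
    proof (cases "\<alpha> \<in> TC")
      case a: True
      have R: "Phi (Psi p) \<alpha> = (\<lambda>i. if i \<in> S \<alpha> then ei \<alpha> (Psi p (e \<alpha> i)) else i)"
        unfolding Phi_def using a by (rule restrict_apply')
      show ?thesis
      proof (rule ext)
        fix i show "Phi (Psi p) \<alpha> i = p \<alpha> i"
        proof (cases "i \<in> S \<alpha>")
          case i: True
          have pi: "p \<alpha> i \<in> S \<alpha>" using i by (simp only: permutes_in_image[OF pp[OF a]])
          have 2: "ei \<alpha> (e \<alpha> (p \<alpha> i)) = p \<alpha> i" by (rule ei_e[OF a pi])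
          have 1: "Psi p (e \<alpha> i) = e \<alpha> (p \<alpha> i)" using Psi_on[OF a e_in[OF a i]] by (simp only: ei_e[OF a i])
          have 3: "Phi (Psi p) \<alpha> i = ei \<alpha> (Psi p (e \<alpha> i))" by (simp only: R if_P[OF i])
          show ?thesis unfolding 3 1 2 ..
        next
          case ni: False
          have 1: "p \<alpha> i = i" using permutes_not_in[OF pp[OF a] ni] .
          have 3: "Phi (Psi p) \<alpha> i = i" by (simp only: R if_not_P[OF ni])
          show ?thesis unfolding 1 3 ..
        qed
      qed
    next
      case False
      have "Phi (Psi p) \<alpha> = undefined" unfolding Phi_def restrict_def by (simp only: if_not_P[OF False])
      then show ?thesis using PiE_arb[OF p False] by simp
    qed
  qed
qed

lemma iso_part: "(AutP n leq)\<lparr>carrier := Kset\<rparr> \<cong> product_group TC (\<lambda>\<alpha>. sym_group (card \<alpha>))"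
proof (rule is_isoI)
  have KB: "\<sigma> \<in> Kset \<Longrightarrow> \<sigma> \<in> Bij Xn" for \<sigma> by (simp add: Kset_def)
  have h: "Phi \<in> hom ((AutP n leq)\<lparr>carrier := Kset\<rparr>) (product_group TC (\<lambda>\<alpha>. sym_group (card \<alpha>)))"
  proof (rule homI)
    fix x assume "x \<in> carrier ((AutP n leq)\<lparr>carrier := Kset\<rparr>)"
    then show "Phi x \<in> carrier (product_group TC (\<lambda>\<alpha>. sym_group (card \<alpha>)))"
      using Phi_carrier by simp
  next
    fix x y assume "x \<in> carrier ((AutP n leq)\<lparr>carrier := Kset\<rparr>)" "y \<in> carrier ((AutP n leq)\<lparr>carrier := Kset\<rparr>)"
    then have xy: "x \<in> Kset" "y \<in> Kset" by simp_all
    have m1: "x \<otimes>\<^bsub>(AutP n leq)\<lparr>carrier := Kset\<rparr>\<^esub> y = compose Xn x y"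
      using mult_AutP[OF KB[OF xy(1)] KB[OF xy(2)]] by simp
    have m2: "Phi x \<otimes>\<^bsub>product_group TC (\<lambda>\<alpha>. sym_group (card \<alpha>))\<^esub> Phi y = (\<lambda>\<alpha>\<in>TC. Phi x \<alpha> \<circ> Phi y \<alpha>)"
      by (simp add: sym_group_def)
    show "Phi (x \<otimes>\<^bsub>(AutP n leq)\<lparr>carrier := Kset\<rparr>\<^esub> y) = Phi x \<otimes>\<^bsub>product_group TC (\<lambda>\<alpha>. sym_group (card \<alpha>))\<^esub> Phi y"
      unfolding m1 m2 using Phi_mult[OF xy] .
  qed
  have b: "bij_betw Phi Kset (\<Pi>\<^sub>E \<alpha>\<in>TC. carrier (sym_group (card \<alpha>)))"
    unfolding bij_betw_def
  proof
    show "inj_on Phi Kset" by (rule Phi_inj)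
    show "Phi ` Kset = (\<Pi>\<^sub>E \<alpha>\<in>TC. carrier (sym_group (card \<alpha>)))"
    proof (intro equalityI subsetI)
      fix q assume "q \<in> Phi ` Kset" then show "q \<in> (\<Pi>\<^sub>E \<alpha>\<in>TC. carrier (sym_group (card \<alpha>)))"
        using Phi_carrier by blast
    next
      fix q assume q: "q \<in> (\<Pi>\<^sub>E \<alpha>\<in>TC. carrier (sym_group (card \<alpha>)))"
      show "q \<in> Phi ` Kset" using Psi_K[OF q] by (metis image_eqI)
    qed
  qed
  show "Phi \<in> iso ((AutP n leq)\<lparr>carrier := Kset\<rparr>) (product_group TC (\<lambda>\<alpha>. sym_group (card \<alpha>)))"
    unfolding iso_def using h b by simp
qed

end

context nlp begin

lemma surj_dir1: assumes "\<psi> \<in> carrier (AutTwin n leq)" "\<alpha> \<in> TC"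
  and s: "twin_pi n leq ` carrier (AutP n leq) = carrier (AutTwin n leq)"
  shows "card (\<psi> \<alpha>) = card \<alpha>"
proof -
  obtain \<phi> where ph: "\<phi> \<in> carrier (AutP n leq)" "\<psi> = twin_pi n leq \<phi>" using assms(1) s by auto
  have a: "isAut \<phi>" using ph(1) carrier_AutP by simp
  have "\<psi> \<alpha> = \<phi> ` \<alpha>" using ph(2) assms(2) by (simp add: twin_pi_def)
  moreover have "inj_on \<phi> \<alpha>" using inj_on_subset[OF aut_inj[OF a] TC_sub[OF assms(2)]] .
  ultimately show ?thesis by (simp add: card_image)
qed

definition "bsel \<psi> \<alpha> = (SOME h. bij_betw h \<alpha> (\<psi> \<alpha>))"
definition "Lift \<psi> = (\<lambda>x\<in>Xn. bsel \<psi> (cls x) x)"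

lemma surj_dir2: assumes ps: "\<psi> \<in> carrier (AutTwin n leq)"
  and c: "\<And>\<alpha>. \<alpha> \<in> TC \<Longrightarrow> card (\<psi> \<alpha>) = card \<alpha>"
  shows "\<psi> \<in> twin_pi n leq ` carrier (AutP n leq)"
proof -
  have pB: "\<psi> \<in> Bij TC" and ple: "\<And>\<alpha> \<beta>. \<alpha> \<in> TC \<Longrightarrow> \<beta> \<in> TC \<Longrightarrow> twin_le leq \<alpha> \<beta> \<longleftrightarrow> twin_le leq (\<psi> \<alpha>) (\<psi> \<beta>)"
    using ps unfolding carrier_AutTwin by auto
  have pbij: "bij_betw \<psi> TC TC" using pB by (simp add: Bij_def)
  have pinj: "inj_on \<psi> TC" using pbij by (rule bij_betw_imp_inj_on)
  have pim: "\<psi> ` TC = TC" using pbij by (rule bij_betw_imp_surj_on)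
  have pin: "\<psi> \<alpha> \<in> TC" if "\<alpha> \<in> TC" for \<alpha> using pbij that by (rule bij_betw_apply)
  define \<phi> where "\<phi> = Lift \<psi>"
  have bs: "bij_betw (bsel \<psi> \<alpha>) \<alpha> (\<psi> \<alpha>)" if a: "\<alpha> \<in> TC" for \<alpha>
  proof -
    have "\<exists>h. bij_betw h \<alpha> (\<psi> \<alpha>)"
      using finite_same_card_bij[OF TC_fin[OF a] TC_fin[OF pin[OF a]] c[OF a, symmetric]] .
    then show ?thesis unfolding bsel_def by (rule someI_ex)
  qed
  have on: "\<phi> x = bsel \<psi> \<alpha> x" if a: "\<alpha> \<in> TC" "x \<in> \<alpha>" for \<alpha> x
  proof -
    have "x \<in> Xn" using TC_sub[OF a(1)] a(2) by (rule subsetD)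
    moreover have "cls x = \<alpha>" using TC_cls[OF a] by simp
    ultimately show ?thesis unfolding \<phi>_def Lift_def by simp
  qed
  have bb: "bij_betw \<phi> \<alpha> (\<psi> \<alpha>)" if a: "\<alpha> \<in> TC" for \<alpha>
    using bs[OF a] by (rule bij_betw_cong[THEN iffD1, rotated]) (simp add: on[OF a])
  have inc: "\<phi> x \<in> \<psi> (cls x)" if "x \<in> Xn" for x
    using bb[OF cls_TC[OF that]] cls_mem[OF that] by (rule bij_betw_apply)
  have inj: "inj_on \<phi> Xn"
  proof (rule inj_onI)
    fix x y assume xy: "x \<in> Xn" "y \<in> Xn" "\<phi> x = \<phi> y"
    have c1: "\<phi> x \<in> \<psi> (cls x)" by (rule inc[OF xy(1)])
    have c2: "\<phi> x \<in> \<psi> (cls y)" unfolding xy(3) by (rule inc[OF xy(2)])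
    have "\<psi> (cls x) = \<psi> (cls y)" by (rule TC_disj[OF pin[OF cls_TC[OF xy(1)]] pin[OF cls_TC[OF xy(2)]] c1 c2])
    then have e: "cls x = cls y" using inj_onD[OF pinj _ cls_TC[OF xy(1)] cls_TC[OF xy(2)]] by blast
    have y: "y \<in> cls x" unfolding e by (rule cls_mem[OF xy(2)])
    have "bij_betw \<phi> (cls x) (\<psi> (cls x))" by (rule bb[OF cls_TC[OF xy(1)]])
    then have ic: "inj_on \<phi> (cls x)" by (rule bij_betw_imp_inj_on)
    show "x = y" by (rule inj_onD[OF ic xy(3) cls_mem[OF xy(1)] y])
  qed
  have im: "\<phi> ` Xn = Xn"
  proof (intro equalityI subsetI)
    fix z assume "z \<in> \<phi> ` Xn"
    then obtain x where x: "x \<in> Xn" "z = \<phi> x" by (rule imageE)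
    have "z \<in> \<psi> (cls x)" unfolding x(2) by (rule inc[OF x(1)])
    then show "z \<in> Xn" using TC_sub[OF pin[OF cls_TC[OF x(1)]]] by (rule subsetD[rotated])
  next
    fix z assume z: "z \<in> Xn"
    have "cls z \<in> \<psi> ` TC" unfolding pim by (rule cls_TC[OF z])
    then obtain \<alpha> where a: "\<alpha> \<in> TC" "cls z = \<psi> \<alpha>" by (rule imageE)
    have "\<phi> ` \<alpha> = \<psi> \<alpha>" using bb[OF a(1)] by (rule bij_betw_imp_surj_on)
    then have "z \<in> \<phi> ` \<alpha>" using cls_mem[OF z] a(2) by simp
    then obtain w where w: "w \<in> \<alpha>" "z = \<phi> w" by (rule imageE)
    have "w \<in> Xn" using TC_sub[OF a(1)] w(1) by (rule subsetD)
    then show "z \<in> \<phi> ` Xn" using w(2) by (rule rev_image_eqI)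
  qed
  have leqp: "leq x y \<longleftrightarrow> leq (\<phi> x) (\<phi> y)" if xy: "x \<in> Xn" "y \<in> Xn" for x y
  proof -
    define \<alpha> where "\<alpha> = cls x"
    define \<beta> where "\<beta> = cls y"
    have ab: "\<alpha> \<in> TC" "\<beta> \<in> TC" "x \<in> \<alpha>" "y \<in> \<beta>" unfolding \<alpha>_def \<beta>_def
      using cls_TC cls_mem xy by auto
    have fab: "\<phi> x \<in> \<psi> \<alpha>" "\<phi> y \<in> \<psi> \<beta>" unfolding \<alpha>_def \<beta>_def using inc xy by auto
    show ?thesis
    proof (cases "\<alpha> = \<beta>")
      case True
      have "leq x y \<longleftrightarrow> x = y" using in_class_leq[OF ab(1) ab(3)] ab(4) True by simp
      also have "\<dots> \<longleftrightarrow> \<phi> x = \<phi> y" using inj xy inj_on_def by metis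
      also have "\<dots> \<longleftrightarrow> leq (\<phi> x) (\<phi> y)" using in_class_leq[OF pin[OF ab(1)] fab(1)] fab(2) True by simp
      finally show ?thesis .
    next
      case False
      have ne: "\<psi> \<alpha> \<noteq> \<psi> \<beta>" using False inj_onD[OF pinj _ ab(1) ab(2)] by blast
      have "leq x y \<longleftrightarrow> twin_le leq \<alpha> \<beta>" by (rule diff_class_leq[OF ab(1,2) False ab(3,4)])
      also have "\<dots> \<longleftrightarrow> twin_le leq (\<psi> \<alpha>) (\<psi> \<beta>)" by (rule ple[OF ab(1,2)])
      also have "\<dots> \<longleftrightarrow> leq (\<phi> x) (\<phi> y)" by (rule diff_class_leq[OF pin[OF ab(1)] pin[OF ab(2)] ne fab, symmetric])
      finally show ?thesis .
    qed
  qed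
  have extn: "\<phi> \<in> extensional Xn" unfolding \<phi>_def Lift_def by simp
  have "bij_betw \<phi> Xn Xn" using inj im by (simp add: bij_betw_def)
  then have "\<phi> \<in> Bij Xn" using extn by (simp add: Bij_def)
  then have A: "isAut \<phi>" unfolding isAut_def using leqp by blast
  have "twin_pi n leq \<phi> = \<psi>"
  proof (rule ext)
    fix \<alpha> show "twin_pi n leq \<phi> \<alpha> = \<psi> \<alpha>"
    proof (cases "\<alpha> \<in> TC")
      case True
      have "\<phi> ` \<alpha> = \<psi> \<alpha>" using bb[OF True] by (rule bij_betw_imp_surj_on)
      then show ?thesis using True unfolding twin_pi_def by simp
    next
      case False
      have "\<psi> \<alpha> = undefined" using pB False unfolding Bij_def extensional_def by blast
      then show ?thesis using False unfolding twin_pi_def by simp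
    qed
  qed
  then show ?thesis using A carrier_AutP by auto
qed

lemma surj_iff: "twin_pi n leq ` carrier (AutP n leq) = carrier (AutTwin n leq) \<longleftrightarrow>
           (\<forall>\<psi>\<in>carrier (AutTwin n leq). \<forall>\<alpha>\<in>TC. card (\<psi> \<alpha>) = card \<alpha>)"
proof
  assume "twin_pi n leq ` carrier (AutP n leq) = carrier (AutTwin n leq)"
  then show "\<forall>\<psi>\<in>carrier (AutTwin n leq). \<forall>\<alpha>\<in>TC. card (\<psi> \<alpha>) = card \<alpha>" using surj_dir1 by blast
next
  assume c: "\<forall>\<psi>\<in>carrier (AutTwin n leq). \<forall>\<alpha>\<in>TC. card (\<psi> \<alpha>) = card \<alpha>"
  show "twin_pi n leq ` carrier (AutP n leq) = carrier (AutTwin n leq)"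
  proof (intro equalityI subsetI)
    fix \<psi> assume "\<psi> \<in> twin_pi n leq ` carrier (AutP n leq)"
    then show "\<psi> \<in> carrier (AutTwin n leq)" using pi_carrier carrier_AutP by auto
  next
    fix \<psi> assume p: "\<psi> \<in> carrier (AutTwin n leq)"
    show "\<psi> \<in> twin_pi n leq ` carrier (AutP n leq)" using surj_dir2[OF p] c p by blast
  qed
qed

lemma main: "twin_pi n leq \<in> hom (AutP n leq) (AutTwin n leq) \<and>
         kernel (AutP n leq) (AutTwin n leq) (twin_pi n leq) =
           {\<sigma> \<in> Bij (Xset n). \<forall>\<alpha>\<in>twin_classes n leq. bij_betw \<sigma> \<alpha> \<alpha>} \<and>
         (AutP n leq)\<lparr>carrier := kernel (AutP n leq) (AutTwin n leq) (twin_pi n leq)\<rparr>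
           \<cong> product_group (twin_classes n leq) (\<lambda>\<alpha>. sym_group (card \<alpha>)) \<and>
         (twin_pi n leq ` carrier (AutP n leq) = carrier (AutTwin n leq) \<longleftrightarrow>
           (\<forall>\<psi>\<in>carrier (AutTwin n leq). \<forall>\<alpha>\<in>twin_classes n leq. card (\<psi> \<alpha>) = card \<alpha>))"
  using pi_hom kernel_eq iso_part surj_iff unfolding Kset_def by simp

end

theorem proposition4p6:
  fixes n :: nat and leq :: "nat \<Rightarrow> nat \<Rightarrow> bool"
  assumes "nl_poset n leq"
  shows "twin_pi n leq \<in> hom (AutP n leq) (AutTwin n leq) \<and>
         kernel (AutP n leq) (AutTwin n leq) (twin_pi n leq) =
           {\<sigma> \<in> Bij (Xset n). \<forall>\<alpha>\<in>twin_classes n leq. bij_betw \<sigma> \<alpha> \<alpha>} \<and>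
         (AutP n leq)\<lparr>carrier := kernel (AutP n leq) (AutTwin n leq) (twin_pi n leq)\<rparr>
           \<cong> product_group (twin_classes n leq) (\<lambda>\<alpha>. sym_group (card \<alpha>)) \<and>
         (twin_pi n leq ` carrier (AutP n leq) = carrier (AutTwin n leq) \<longleftrightarrow>
           (\<forall>\<psi>\<in>carrier (AutTwin n leq). \<forall>\<alpha>\<in>twin_classes n leq. card (\<psi> \<alpha>) = card \<alpha>))"
proof -
  interpret nlp n leq by (rule nlp.intro) (rule assms)
  show ?thesis by (rule main)
qed

end
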